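(* Let $z_1,z_2\in(0,1)$ and set $$\alpha_1=z_2\frac{1-z_1}{1+z_1},\qquad \alpha_2=\frac{1}{z_2}\frac{1-z_1}{1+z_1}.$$ Define, for $n\in\mathbb Z$, $$w_n=\int_{-\pi}^{\pi}\frac{d\theta}{2\pi}\,\frac{\left(1+\alpha_1\alpha_2-(\alpha_1+\alpha_2)\cos\theta\right)\cos(n\theta)-(\alpha_1-\alpha_2)\sin\theta\,\sin(n\theta)}{\sqrt{(1-2\alpha_1\cos\theta+\alpha_1^2)(1-2\alpha_2\cos\theta+\alpha_2^2)}},$$ the Fourier coefficients of the weight $w(\zeta)=\left[\frac{(1-\alpha_1\zeta)(1-\alpha_2\zeta^{-1})}{(1-\alpha_1\zeta^{-1})(1-\alpha_2\zeta)}\right]^{1/2}$ on $|\zeta|=1$ (these are the Toeplitz matrix elements whose $N\times N$ Toeplitz determinant gives the column correlation $\langle\sigma_{0,0}\sigma_{0,N}\rangle$ of the anisotropic square lattice Ising model). Then for every $n\in\mathbb Z$, \begin{multline*} 2\alpha_1\alpha_2(n-3)w_{n-3}-(1+\alpha_1\alpha_2)\left[(2n-5)\alpha_1+(2n-3)\alpha_2\right]w_{n-2}\\ +2\left[(n-2)\alpha_1^2+n\alpha_2^2+(n-1)(1+\alpha_1\alpha_2)^2\right]w_{n-1}\\ -(1+\alpha_1\alpha_2)\left[(2n-1)\alpha_1+(2n+1)\alpha_2\right]w_n+2\alpha_1\alpha_2(n+1)w_{n+1}=0 . \end{multline*}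
   Context: Here $z_i=\tanh K_i$ where $K_1,K_2$ are the horizontal and vertical couplings of the square lattice Ising model (ferromagnetic regime); the square root in the integrand is taken positive. *)

theory Defs
  imports "HOL-Analysis.Analysis"
begin

definition ising_w :: "real \<Rightarrow> real \<Rightarrow> int \<Rightarrow> real" where
  "ising_w a1 a2 n =
     integral {-pi..pi}
       (\<lambda>\<theta>. ((1 + a1 * a2 - (a1 + a2) * cos \<theta>) * cos (of_int n * \<theta>)
               - (a1 - a2) * sin \<theta> * sin (of_int n * \<theta>))
             / sqrt ((1 - 2 * a1 * cos \<theta> + a1\<^sup>2) * (1 - 2 * a2 * cos \<theta> + a2\<^sup>2)))
     / (2 * pi)"

end

theory Submission
  imports Defs
begin

lemma alg:
  fixes a1 a2 c s C S m P Q A B :: real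
  assumes h: "s^2 + c^2 = 1"
  and hP: "P = 1 + a1 * a2 - (a1 + a2) * c"
  and hQ: "Q = (a1 - a2) * s"
  and hA: "A = 1 - 2 * a1 * c + a1^2"
  and hB: "B = 1 - 2 * a2 * c + a2^2"
  shows "2 * (((a1 + a2) * s * S + m * P * C + (a1 - a2) * c * C - m * Q * S) * (A * B) + (P * S + Q * C) * (a1 * s * B + a2 * s * A))
   = 2 * a1 * a2 * (m - 2) * (P * (C * (2 * c^2 - 1) + S * (2 * s * c)) - Q * (S * (2 * c^2 - 1) - C * (2 * s * c)))
   - (1 + a1 * a2) * ((2 * m - 3) * a1 + (2 * m - 1) * a2) * (P * (C * c + S * s) - Q * (S * c - C * s))
   + 2 * ((m - 1) * a1^2 + (m + 1) * a2^2 + m * (1 + a1 * a2)^2) * (P * C - Q * S)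
   - (1 + a1 * a2) * ((2 * m + 1) * a1 + (2 * m + 3) * a2) * (P * (C * c - S * s) - Q * (S * c + C * s))
   + 2 * a1 * a2 * (m + 2) * (P * (C * (2 * c^2 - 1) - S * (2 * s * c)) - Q * (S * (2 * c^2 - 1) + C * (2 * s * c)))"
  unfolding hP hQ hA hB using h by algebra

definition Dn :: "real \<Rightarrow> real \<Rightarrow> real \<Rightarrow> real" where
  "Dn a1 a2 t = (1 - 2 * a1 * cos t + a1\<^sup>2) * (1 - 2 * a2 * cos t + a2\<^sup>2)"

definition Nm :: "real \<Rightarrow> real \<Rightarrow> real \<Rightarrow> real \<Rightarrow> real" where
  "Nm a1 a2 k t = (1 + a1 * a2 - (a1 + a2) * cos t) * cos (k * t) - (a1 - a2) * sin t * sin (k * t)"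

definition Ig :: "real \<Rightarrow> real \<Rightarrow> real \<Rightarrow> real \<Rightarrow> real" where
  "Ig a1 a2 k t = Nm a1 a2 k t / sqrt (Dn a1 a2 t)"

definition Gf :: "real \<Rightarrow> real \<Rightarrow> real \<Rightarrow> real \<Rightarrow> real" where
  "Gf a1 a2 m t = ((1 + a1 * a2 - (a1 + a2) * cos t) * sin (m * t) + (a1 - a2) * sin t * cos (m * t))
      * sqrt (Dn a1 a2 t)"

definition cmb :: "real \<Rightarrow> real \<Rightarrow> real \<Rightarrow> real \<Rightarrow> real" where
  "cmb a1 a2 m t = 2 * a1 * a2 * (m - 2) * Ig a1 a2 (m - 2) t
     - (1 + a1 * a2) * ((2 * m - 3) * a1 + (2 * m - 1) * a2) * Ig a1 a2 (m - 1) t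
     + 2 * ((m - 1) * a1^2 + (m + 1) * a2^2 + m * (1 + a1 * a2)^2) * Ig a1 a2 m t
     - (1 + a1 * a2) * ((2 * m + 1) * a1 + (2 * m + 3) * a2) * Ig a1 a2 (m + 1) t
     + 2 * a1 * a2 * (m + 2) * Ig a1 a2 (m + 2) t"

lemma w_eq: "ising_w a1 a2 n = integral {-pi..pi} (Ig a1 a2 (of_int n)) / (2 * pi)"
  unfolding ising_w_def Ig_def Nm_def Dn_def ..

lemma du: "((\<lambda>t. (1 + a1 * a2 - (a1 + a2) * cos t) * sin (m * t) + (a1 - a2) * sin t * cos (m * t))
  has_real_derivative
   ((a1+a2) * sin t * sin (m*t) + (1 + a1 * a2 - (a1 + a2) * cos t) * m * cos (m*t)
    + (a1 - a2) * cos t * cos (m*t) - (a1 - a2) * sin t * m * sin (m*t))) (at t)"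
  by (auto intro!: derivative_eq_intros simp: algebra_simps)

lemma dD: "((\<lambda>t. Dn a1 a2 t) has_real_derivative
   (2 * a1 * sin t * (1 - 2 * a2 * cos t + a2\<^sup>2) + 2 * a2 * sin t * (1 - 2 * a1 * cos t + a1\<^sup>2))) (at t)"
  unfolding Dn_def by (auto intro!: derivative_eq_intros simp: algebra_simps)

lemma dsq: "x > 0 \<Longrightarrow> (f has_real_derivative d) (at t) \<Longrightarrow> f t = x \<Longrightarrow>
   ((\<lambda>t. sqrt (f t)) has_real_derivative (d / (2 * sqrt x))) (at t)"
  by (auto intro!: derivative_eq_intros simp: field_simps)

lemma trig_exp:
  fixes m t :: real
  shows "cos ((m - 2) * t) = cos (m*t) * (2 * cos t ^ 2 - 1) + sin (m*t) * (2 * sin t * cos t)"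
    "sin ((m - 2) * t) = sin (m*t) * (2 * cos t ^ 2 - 1) - cos (m*t) * (2 * sin t * cos t)"
    "cos ((m - 1) * t) = cos (m*t) * cos t + sin (m*t) * sin t"
    "sin ((m - 1) * t) = sin (m*t) * cos t - cos (m*t) * sin t"
    "cos ((m + 1) * t) = cos (m*t) * cos t - sin (m*t) * sin t"
    "sin ((m + 1) * t) = sin (m*t) * cos t + cos (m*t) * sin t"
    "cos ((m + 2) * t) = cos (m*t) * (2 * cos t ^ 2 - 1) - sin (m*t) * (2 * sin t * cos t)"
    "sin ((m + 2) * t) = sin (m*t) * (2 * cos t ^ 2 - 1) + cos (m*t) * (2 * sin t * cos t)"
proof -
  have e1: "(m - 2) * t = m*t - 2*t" "(m - 1) * t = m*t - t" "(m + 1) * t = m*t + t" "(m + 2) * t = m*t + 2*t"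
    by (simp_all add: algebra_simps)
  show "cos ((m - 2) * t) = cos (m*t) * (2 * cos t ^ 2 - 1) + sin (m*t) * (2 * sin t * cos t)"
    unfolding e1 cos_diff cos_double_cos sin_double by simp
  show "sin ((m - 2) * t) = sin (m*t) * (2 * cos t ^ 2 - 1) - cos (m*t) * (2 * sin t * cos t)"
    unfolding e1 sin_diff cos_double_cos sin_double by simp
  show "cos ((m - 1) * t) = cos (m*t) * cos t + sin (m*t) * sin t"
    unfolding e1 cos_diff by simp
  show "sin ((m - 1) * t) = sin (m*t) * cos t - cos (m*t) * sin t"
    unfolding e1 sin_diff by simp
  show "cos ((m + 1) * t) = cos (m*t) * cos t - sin (m*t) * sin t"
    unfolding e1 cos_add by simp
  show "sin ((m + 1) * t) = sin (m*t) * cos t + cos (m*t) * sin t"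
    unfolding e1 sin_add by simp
  show "cos ((m + 2) * t) = cos (m*t) * (2 * cos t ^ 2 - 1) - sin (m*t) * (2 * sin t * cos t)"
    unfolding e1 cos_add cos_double_cos sin_double by simp
  show "sin ((m + 2) * t) = sin (m*t) * (2 * cos t ^ 2 - 1) + cos (m*t) * (2 * sin t * cos t)"
    unfolding e1 sin_add cos_double_cos sin_double by simp
qed

lemma dG:
  assumes pos: "Dn a1 a2 t > 0"
  shows "(Gf a1 a2 m has_real_derivative (1/2) * cmb a1 a2 m t) (at t)"
proof -
  define c where "c = cos t"
  define s where "s = sin t"
  define C where "C = cos (m * t)"
  define S where "S = sin (m * t)"
  define P where "P = 1 + a1 * a2 - (a1 + a2) * c"
  define Q where "Q = (a1 - a2) * s"
  define A where "A = 1 - 2 * a1 * c + a1^2"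
  define B where "B = 1 - 2 * a2 * c + a2^2"
  define q where "q = sqrt (Dn a1 a2 t)"
  have D: "Dn a1 a2 t = A * B" unfolding Dn_def A_def B_def c_def ..
  have qpos: "q > 0" using pos by (simp add: q_def)
  have qq: "q * q = A * B" using pos D by (simp add: q_def)
  have h: "s^2 + c^2 = 1" by (simp add: s_def c_def)
  note key = alg[OF h P_def Q_def A_def B_def, of m C S]
  have d1: "(Gf a1 a2 m has_real_derivative
     ((a1+a2) * s * S + P * m * C + (a1 - a2) * c * C - Q * m * S) * q
     + (P * S + Q * C) * ((2 * a1 * s * B + 2 * a2 * s * A) / (2 * q))) (at t)"
    unfolding Gf_def
    apply (rule DERIV_cong[OF DERIV_mult'[OF du dsq[OF pos dD refl]]])
    by (simp add: c_def s_def C_def S_def P_def Q_def A_def B_def q_def algebra_simps)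
  have N: "Nm a1 a2 (m - 2) t = P * (C * (2 * c^2 - 1) + S * (2 * s * c)) - Q * (S * (2 * c^2 - 1) - C * (2 * s * c))"
     "Nm a1 a2 (m - 1) t = P * (C * c + S * s) - Q * (S * c - C * s)"
     "Nm a1 a2 m t = P * C - Q * S"
     "Nm a1 a2 (m + 1) t = P * (C * c - S * s) - Q * (S * c + C * s)"
     "Nm a1 a2 (m + 2) t = P * (C * (2 * c^2 - 1) - S * (2 * s * c)) - Q * (S * (2 * c^2 - 1) + C * (2 * s * c))"
    unfolding Nm_def trig_exp P_def Q_def c_def s_def C_def S_def by (simp_all add: algebra_simps)
  have cm1: "cmb a1 a2 m t = (2 * a1 * a2 * (m - 2) * Nm a1 a2 (m - 2) t
     - (1 + a1 * a2) * ((2 * m - 3) * a1 + (2 * m - 1) * a2) * Nm a1 a2 (m - 1) t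
     + 2 * ((m - 1) * a1^2 + (m + 1) * a2^2 + m * (1 + a1 * a2)^2) * Nm a1 a2 m t
     - (1 + a1 * a2) * ((2 * m + 1) * a1 + (2 * m + 3) * a2) * Nm a1 a2 (m + 1) t
     + 2 * a1 * a2 * (m + 2) * Nm a1 a2 (m + 2) t) / q"
    unfolding cmb_def Ig_def q_def[symmetric]
    by (simp only: add_divide_distrib diff_divide_distrib times_divide_eq_right)
  have cm: "cmb a1 a2 m t * q = 2 * (((a1 + a2) * s * S + m * P * C + (a1 - a2) * c * C - m * Q * S) * (A * B) + (P * S + Q * C) * (a1 * s * B + a2 * s * A))"
  proof -
    have cmN: "2 * a1 * a2 * (m - 2) * Nm a1 a2 (m - 2) t
     - (1 + a1 * a2) * ((2 * m - 3) * a1 + (2 * m - 1) * a2) * Nm a1 a2 (m - 1) t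
     + 2 * ((m - 1) * a1^2 + (m + 1) * a2^2 + m * (1 + a1 * a2)^2) * Nm a1 a2 m t
     - (1 + a1 * a2) * ((2 * m + 1) * a1 + (2 * m + 3) * a2) * Nm a1 a2 (m + 1) t
     + 2 * a1 * a2 * (m + 2) * Nm a1 a2 (m + 2) t = 2 * (((a1 + a2) * s * S + m * P * C + (a1 - a2) * c * C - m * Q * S) * (A * B) + (P * S + Q * C) * (a1 * s * B + a2 * s * A))"
      unfolding N by (rule alg[OF h P_def Q_def A_def B_def, symmetric])
    show ?thesis unfolding cm1 cmN using qpos by simp
  qed
  show ?thesis
  proof (rule DERIV_cong[OF d1])
    show "((a1+a2) * s * S + P * m * C + (a1 - a2) * c * C - Q * m * S) * q
     + (P * S + Q * C) * ((2 * a1 * s * B + 2 * a2 * s * A) / (2 * q)) = 1 / 2 * cmb a1 a2 m t"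
    proof -
      have "cmb a1 a2 m t = 2 * (((a1 + a2) * s * S + m * P * C + (a1 - a2) * c * C - m * Q * S) * (q * q) + (P * S + Q * C) * (a1 * s * B + a2 * s * A)) / q"
        using cm qpos qq by (simp add: field_simps)
      then show ?thesis using qpos by (simp add: field_simps)
    qed
  qed
qed


lemma aux1: fixes a1 a2 c s :: real assumes "s^2 + c^2 = 1"
  shows "(1 - 2 * a1 * c + a1^2) * (1 - 2 * a2 * c + a2^2) = (1 + a1 * a2 - (a1 + a2) * c)^2 + ((a1 - a2) * s)^2"
  using assms by algebra

lemma aux2: fixes P Q C S :: real
  shows "(P * C - Q * S)^2 + (P * S + Q * C)^2 = (P^2 + Q^2) * (C^2 + S^2)"
  by (simp add: power2_eq_square algebra_simps)

lemma fin: fixes c1 c2 c3 c4 c5 I1 I2 I3 I4 I5 k :: real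
  assumes "c1 * I1 - c2 * I2 + c3 * I3 - c4 * I4 + c5 * I5 = 0"
  shows "c1 * (I1 * k) - c2 * (I2 * k) + c3 * (I3 * k) - c4 * (I4 * k) + c5 * (I5 * k) = 0"
proof -
  have "c1 * (I1 * k) - c2 * (I2 * k) + c3 * (I3 * k) - c4 * (I4 * k) + c5 * (I5 * k) = (c1 * I1 - c2 * I2 + c3 * I3 - c4 * I4 + c5 * I5) * k"
    by (simp add: algebra_simps)
  thus ?thesis using assms by simp
qed

lemma Ig_bound: "\<bar>Ig a1 a2 k t\<bar> \<le> 1"
proof -
  have e1: "Dn a1 a2 t = (1 + a1 * a2 - (a1 + a2) * cos t)^2 + ((a1 - a2) * sin t)^2"
    unfolding Dn_def by (rule aux1[OF sin_cos_squared_add])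
  have e2: "(Nm a1 a2 k t)^2
     + ((1 + a1 * a2 - (a1 + a2) * cos t) * sin (k * t) + (a1 - a2) * sin t * cos (k * t))^2
     = ((1 + a1 * a2 - (a1 + a2) * cos t)^2 + ((a1 - a2) * sin t)^2) * ((cos (k * t))^2 + (sin (k * t))^2)"
    unfolding Nm_def by (rule aux2)
  have eq: "Dn a1 a2 t = (Nm a1 a2 k t)^2
     + ((1 + a1 * a2 - (a1 + a2) * cos t) * sin (k * t) + (a1 - a2) * sin t * cos (k * t))^2"
    unfolding e1 e2 sin_cos_squared_add2 by simp
  have Dnn: "0 \<le> Dn a1 a2 t" unfolding eq by (intro add_nonneg_nonneg zero_le_power2)
  have "(Nm a1 a2 k t)^2 \<le> Dn a1 a2 t" unfolding eq by simp
  hence "sqrt ((Nm a1 a2 k t)^2) \<le> sqrt (Dn a1 a2 t)" by (rule real_sqrt_le_mono)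
  hence le: "\<bar>Nm a1 a2 k t\<bar> \<le> sqrt (Dn a1 a2 t)" by simp
  show ?thesis
  proof (cases "sqrt (Dn a1 a2 t) = 0")
    case True thus ?thesis by (simp add: Ig_def)
  next
    case False
    have "sqrt (Dn a1 a2 t) \<ge> 0" using Dnn by simp
    hence qp: "sqrt (Dn a1 a2 t) > 0" using False by linarith
    have "\<bar>Nm a1 a2 k t\<bar> / sqrt (Dn a1 a2 t) \<le> sqrt (Dn a1 a2 t) / sqrt (Dn a1 a2 t)"
      by (rule divide_right_mono[OF le]) (simp add: Dnn)
    moreover have "\<bar>Ig a1 a2 k t\<bar> = \<bar>Nm a1 a2 k t\<bar> / sqrt (Dn a1 a2 t)"
      unfolding Ig_def abs_divide using qp by simp
    moreover have "sqrt (Dn a1 a2 t) / sqrt (Dn a1 a2 t) = 1" using qp by simp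
    ultimately show ?thesis by linarith
  qed
qed

lemma Ig_int: "Ig a1 a2 k integrable_on {-pi..pi}"
proof (rule measurable_bounded_by_integrable_imp_integrable[where g="\<lambda>_. 1"])
  show "Ig a1 a2 k \<in> borel_measurable (lebesgue_on {-pi..pi})"
    unfolding Ig_def[abs_def] Nm_def Dn_def
    by (intro borel_measurable_divide continuous_imp_measurable_on_sets_lebesgue continuous_intros) auto
  show "(\<lambda>_. 1::real) integrable_on {-pi..pi}" by auto
  show "norm (Ig a1 a2 k x) \<le> 1" for x using Ig_bound by simp
qed auto

lemma Dpos:
  assumes "t \<in> {-pi<..<pi} - {0}"
  shows "Dn a1 a2 t > 0"
proof -
  have "sin t \<noteq> 0"
  proof (cases "t > 0")
    case True thus ?thesis using assms sin_gt_zero[of t] by auto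
  next
    case False
    hence "-t > 0" using assms by auto
    thus ?thesis using assms sin_gt_zero[of "-t"] by auto
  qed
  hence s2: "(sin t)^2 > 0" by simp
  have A: "1 - 2 * a * cos t + a\<^sup>2 = (a - cos t)^2 + (sin t)^2" for a
  proof -
    have "(a - cos t)^2 + (sin t)^2 = a^2 - 2 * a * cos t + ((sin t)^2 + (cos t)^2)"
      by (simp add: power2_eq_square algebra_simps)
    thus ?thesis by simp
  qed
  have "1 - 2 * a * cos t + a\<^sup>2 > 0" for a
    unfolding A using s2 by (meson add_nonneg_pos zero_le_power2)
  thus ?thesis unfolding Dn_def by simp
qed

lemma ftc:
  assumes "sin (m * pi) = 0"
  shows "((\<lambda>t. 1/2 * cmb a1 a2 m t) has_integral 0) {-pi..pi}"
proof -
  have "((\<lambda>t. 1/2 * cmb a1 a2 m t) has_integral (Gf a1 a2 m pi - Gf a1 a2 m (-pi))) {-pi..pi}"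
  proof (rule fundamental_theorem_of_calculus_interior_strong[of "{0}"])
    show "(Gf a1 a2 m has_vector_derivative 1 / 2 * cmb a1 a2 m x) (at x)"
      if "x \<in> {- pi<..<pi} - {0}" for x
      using dG[OF Dpos[OF that]] by (simp add: has_real_derivative_iff_has_vector_derivative)
    show "continuous_on {- pi..pi} (Gf a1 a2 m)"
      unfolding Gf_def[abs_def] Dn_def by (intro continuous_intros)
  qed auto
  moreover have "Gf a1 a2 m pi - Gf a1 a2 m (-pi) = 0"
    using assms by (simp add: Gf_def)
  ultimately show ?thesis by simp
qed

lemma sin_int_pi: "sin (real_of_int k * pi) = 0"
proof (cases k rule: int_cases)
  case (nonneg n)
  then show ?thesis by simp
next
  case (neg n)
  have "sin (real_of_int k * pi) = - sin (real (Suc n) * pi)"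
    unfolding neg by (simp only: of_int_minus of_int_of_nat_eq mult_minus_left sin_minus)
  then show ?thesis by (simp only: sin_npi neg_0_equal_iff_equal)
qed

lemma recur:
  fixes m :: real
  assumes "sin (m * pi) = 0"
  shows "2 * a1 * a2 * (m - 2) * integral {-pi..pi} (Ig a1 a2 (m - 2))
     - (1 + a1 * a2) * ((2 * m - 3) * a1 + (2 * m - 1) * a2) * integral {-pi..pi} (Ig a1 a2 (m - 1))
     + 2 * ((m - 1) * a1^2 + (m + 1) * a2^2 + m * (1 + a1 * a2)^2) * integral {-pi..pi} (Ig a1 a2 m)
     - (1 + a1 * a2) * ((2 * m + 1) * a1 + (2 * m + 3) * a2) * integral {-pi..pi} (Ig a1 a2 (m + 1))
     + 2 * a1 * a2 * (m + 2) * integral {-pi..pi} (Ig a1 a2 (m + 2)) = 0"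
proof -
  have "((\<lambda>t. 1/2 * cmb a1 a2 m t) has_integral
    1/2 * (2 * a1 * a2 * (m - 2) * integral {-pi..pi} (Ig a1 a2 (m - 2))
     - (1 + a1 * a2) * ((2 * m - 3) * a1 + (2 * m - 1) * a2) * integral {-pi..pi} (Ig a1 a2 (m - 1))
     + 2 * ((m - 1) * a1^2 + (m + 1) * a2^2 + m * (1 + a1 * a2)^2) * integral {-pi..pi} (Ig a1 a2 m)
     - (1 + a1 * a2) * ((2 * m + 1) * a1 + (2 * m + 3) * a2) * integral {-pi..pi} (Ig a1 a2 (m + 1))
     + 2 * a1 * a2 * (m + 2) * integral {-pi..pi} (Ig a1 a2 (m + 2)))) {-pi..pi}"
    unfolding cmb_def
    by (intro has_integral_mult_right has_integral_add has_integral_diff integrable_integral Ig_int)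
  from has_integral_unique[OF this ftc[OF assms]] show ?thesis by simp
qed

theorem corollary5:
  fixes z1 z2 a1 a2 :: real and n :: int
  assumes "0 < z1" "z1 < 1" "0 < z2" "z2 < 1"
    and "a1 = z2 * (1 - z1) / (1 + z1)"
    and "a2 = (1 / z2) * ((1 - z1) / (1 + z1))"
  shows "2 * a1 * a2 * of_int (n - 3) * ising_w a1 a2 (n - 3)
         - (1 + a1 * a2) * (of_int (2 * n - 5) * a1 + of_int (2 * n - 3) * a2) * ising_w a1 a2 (n - 2)
         + 2 * (of_int (n - 2) * a1\<^sup>2 + of_int n * a2\<^sup>2 + of_int (n - 1) * (1 + a1 * a2)\<^sup>2)
             * ising_w a1 a2 (n - 1)
         - (1 + a1 * a2) * (of_int (2 * n - 1) * a1 + of_int (2 * n + 1) * a2) * ising_w a1 a2 n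
         + 2 * a1 * a2 * of_int (n + 1) * ising_w a1 a2 (n + 1) = 0"
proof -
  define m where "m = real_of_int n - 1"
  have sm: "sin (m * pi) = 0" unfolding m_def using sin_int_pi[of "n - 1"] by simp
  define k where "k = 1 / (2 * pi)"
  have w: "ising_w a1 a2 (n - 3) = integral {-pi..pi} (Ig a1 a2 (m - 2)) * k"
     "ising_w a1 a2 (n - 2) = integral {-pi..pi} (Ig a1 a2 (m - 1)) * k"
     "ising_w a1 a2 (n - 1) = integral {-pi..pi} (Ig a1 a2 m) * k"
     "ising_w a1 a2 n = integral {-pi..pi} (Ig a1 a2 (m + 1)) * k"
     "ising_w a1 a2 (n + 1) = integral {-pi..pi} (Ig a1 a2 (m + 2)) * k"
    unfolding w_eq k_def m_def by (simp_all add: algebra_simps)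
  have co: "real_of_int (n - 3) = m - 2" "real_of_int (2 * n - 5) = 2 * m - 3"
    "real_of_int (2 * n - 3) = 2 * m - 1" "real_of_int (n - 2) = m - 1"
    "real_of_int (n - 1) = m" "real_of_int (2 * n - 1) = 2 * m + 1"
    "real_of_int (2 * n + 1) = 2 * m + 3" "real_of_int (n + 1) = m + 2" "real_of_int n = m + 1"
    unfolding m_def by simp_all
  show ?thesis
    unfolding w co
    by (rule fin[OF recur[OF sm, of a1 a2]])
qed

end
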